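(* Let $I=\{1,\dots,m\}$, $J=\{1,\dots,n\}$, let $b\in\mathbb{R}^m$, let $\hat{x}\in\mathbb{R}^n$, and let $\Omega\subseteq\mathbb{R}^{m\times n}$ be a convex set. Consider the problem NLO-DG: \[ \min_{A,c,\pi}\ \sum_{j\in J}c_j\hat{x}_j-\sum_{i\in I}b_i\pi_i \] subject to $A\in\Omega$; $\sum_{j\in J}a_{ij}\hat{x}_j\ge b_i$ for all $i\in I$; $\sum_{i\in I}\pi_i=1$; $\sum_{i\in I}a_{ij}\pi_i=c_j$ for all $j\in J$; $\pi_i\ge 0$ for all $i\in I$. Here $A=(a_{ij})\in\mathbb{R}^{m\times n}$ with rows $a_i$, $c\in\mathbb{R}^n$, $\pi\in\mathbb{R}^m$. For each $i\in I$ let \[ t_i=\min_{A}\Big\{\sum_{j\in J}a_{ij}\hat{x}_j-b_i \;:\; A\in\Omega,\ A\hat{x}\ge b\Big\}, \] and let $A^{(i)}$ be an optimal solution of this problem. Let $i^*\in\arg\min_{i\in I}t_i$ and $A^*=A^{(i^* )}$ (with rows $a^*_i$). Then the optimal value of NLO-DG is $t_{i^*}$, and an optimal solution $(A,c,\pi)$ of NLO-DG is given by $a_i=a^*_i$ for all $i\in I$, $c=a^*_{i^*}$, $\pi=e_{i^*}$. Moreover, if for every $i\in I$ either $b_i>0$ or $a_i\neq 0$ for all $A\in\Omega\cap\{A: A\hat{x}\ge b\}$, then this solution satisfies $c\neq 0$ and $a_i\neq 0$ for all $i\in I$.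
   Context: $e_i$ denotes the $i$-th unit vector in $\mathbb{R}^m$. $a_i$ denotes the $i$-th row of a matrix $A$ (viewed as a vector in $\mathbb{R}^n$). *)

theory Defs
  imports "HOL-Analysis.Analysis"
begin

text \<open>Matrices A in R^{m x n} are rendered as real^'n^'m (rows indexed by 'm = I,
 columns by 'n = J); the row a_i is A $ i.\<close>

definition primal_feas :: "(real^'n^'m) set \<Rightarrow> real^'m \<Rightarrow> real^'n \<Rightarrow> real^'n^'m \<Rightarrow> bool" where
  "primal_feas \<Omega> b xh A \<longleftrightarrow> A \<in> \<Omega> \<and> (\<forall>i. (\<Sum>j\<in>UNIV. A $ i $ j * xh $ j) \<ge> b $ i)"

definition nlo_dg_feasible ::
  "(real^'n^'m) set \<Rightarrow> real^'m \<Rightarrow> real^'n \<Rightarrow> real^'n^'m \<Rightarrow> real^'n \<Rightarrow> real^'m \<Rightarrow> bool" where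
  "nlo_dg_feasible \<Omega> b xh A c \<pi> \<longleftrightarrow>
     primal_feas \<Omega> b xh A \<and>
     (\<Sum>i\<in>UNIV. \<pi> $ i) = 1 \<and>
     (\<forall>j. (\<Sum>i\<in>UNIV. A $ i $ j * \<pi> $ i) = c $ j) \<and>
     (\<forall>i. \<pi> $ i \<ge> 0)"

definition nlo_dg_obj :: "real^'m \<Rightarrow> real^'n \<Rightarrow> real^'n \<Rightarrow> real^'m \<Rightarrow> real" where
  "nlo_dg_obj b xh c \<pi> = (\<Sum>j\<in>UNIV. c $ j * xh $ j) - (\<Sum>i\<in>UNIV. b $ i * \<pi> $ i)"

definition row_slack :: "real^'m \<Rightarrow> real^'n \<Rightarrow> 'm \<Rightarrow> real^'n^'m \<Rightarrow> real" where
  "row_slack b xh i A = (\<Sum>j\<in>UNIV. A $ i $ j * xh $ j) - b $ i"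

end

theory Submission
  imports Defs
begin

theorem theorem1:
  fixes \<Omega> :: "(real^'n^'m) set" and b :: "real^'m" and xh :: "real^'n"
    and Aopt :: "'m \<Rightarrow> real^'n^'m" and t :: "'m \<Rightarrow> real" and istar :: 'm
  assumes conv: "convex \<Omega>"
    and opt_feas: "\<And>i. primal_feas \<Omega> b xh (Aopt i)"
    and opt_min: "\<And>i A. primal_feas \<Omega> b xh A \<Longrightarrow> row_slack b xh i (Aopt i) \<le> row_slack b xh i A"
    and t_def: "\<And>i. t i = row_slack b xh i (Aopt i)"
    and istar: "\<And>i. t istar \<le> t i"
  shows "nlo_dg_feasible \<Omega> b xh (Aopt istar) (Aopt istar $ istar) (axis istar 1)
       \<and> nlo_dg_obj b xh (Aopt istar $ istar) (axis istar 1) = t istar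
       \<and> (\<forall>A c \<pi>. nlo_dg_feasible \<Omega> b xh A c \<pi> \<longrightarrow> t istar \<le> nlo_dg_obj b xh c \<pi>)
       \<and> ((\<forall>i. b $ i > 0 \<or> (\<forall>A. primal_feas \<Omega> b xh A \<longrightarrow> A $ i \<noteq> 0))
          \<longrightarrow> Aopt istar $ istar \<noteq> 0 \<and> (\<forall>i. Aopt istar $ i \<noteq> 0))"
proof -
  have ax: "\<And>f::'m \<Rightarrow> real. (\<Sum>i\<in>UNIV. f i * axis istar 1 $ i) = f istar"
    by (simp add: axis_def if_distrib cong: if_cong)
  have axs: "(\<Sum>i\<in>UNIV. (axis istar 1 :: real^'m) $ i) = 1"
    by (simp add: axis_def)
  have P1: "nlo_dg_feasible \<Omega> b xh (Aopt istar) (Aopt istar $ istar) (axis istar 1)"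
    unfolding nlo_dg_feasible_def using opt_feas[of istar] ax axs
    by (auto simp: axis_def)
  have P2: "nlo_dg_obj b xh (Aopt istar $ istar) (axis istar 1) = t istar"
    unfolding nlo_dg_obj_def t_def row_slack_def
    using ax[of "\<lambda>i. b $ i"] by simp
  have P3: "t istar \<le> nlo_dg_obj b xh c \<pi>" if F: "nlo_dg_feasible \<Omega> b xh A c \<pi>" for A c \<pi>
  proof -
    from F have pf: "primal_feas \<Omega> b xh A" and s1: "(\<Sum>i\<in>UNIV. \<pi> $ i) = 1"
      and cj: "\<And>j. c $ j = (\<Sum>i\<in>UNIV. A $ i $ j * \<pi> $ i)" and pos: "\<And>i. \<pi> $ i \<ge> 0"
      unfolding nlo_dg_feasible_def by auto
    have "nlo_dg_obj b xh c \<pi> = (\<Sum>i\<in>UNIV. \<pi> $ i * row_slack b xh i A)"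
    proof -
      have "(\<Sum>j\<in>UNIV. c $ j * xh $ j) = (\<Sum>j\<in>UNIV. \<Sum>i\<in>UNIV. \<pi> $ i * (A $ i $ j * xh $ j))"
        unfolding cj by (simp add: sum_distrib_left sum_distrib_right mult_ac)
      also have "\<dots> = (\<Sum>i\<in>UNIV. \<Sum>j\<in>UNIV. \<pi> $ i * (A $ i $ j * xh $ j))"
        by (rule sum.swap)
      also have "\<dots> = (\<Sum>i\<in>UNIV. \<pi> $ i * (\<Sum>j\<in>UNIV. A $ i $ j * xh $ j))"
        by (simp add: sum_distrib_left)
      finally have e: "(\<Sum>j\<in>UNIV. c $ j * xh $ j) = \<dots>" .
      show ?thesis unfolding nlo_dg_obj_def row_slack_def e
        by (simp add: right_diff_distrib sum_subtractf mult.commute)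
    qed
    also have "\<dots> \<ge> (\<Sum>i\<in>UNIV. \<pi> $ i * t istar)"
    proof (rule sum_mono)
      fix i
      have "t istar \<le> row_slack b xh i A" using istar[of i] t_def[of i] opt_min[OF pf, of i] by simp
      then show "\<pi> $ i * t istar \<le> \<pi> $ i * row_slack b xh i A"
        using pos[of i] by (simp add: mult_left_mono)
    qed
    moreover have "(\<Sum>i\<in>UNIV. \<pi> $ i * t istar) = t istar"
      using s1 by (simp add: sum_distrib_right[symmetric])
    ultimately show ?thesis by simp
  qed
  have P4: "Aopt istar $ i \<noteq> 0"
    if H: "\<forall>i. b $ i > 0 \<or> (\<forall>A. primal_feas \<Omega> b xh A \<longrightarrow> A $ i \<noteq> 0)" for i
  proof -
    have pf: "primal_feas \<Omega> b xh (Aopt istar)" by (rule opt_feas)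
    show ?thesis
    proof (cases "b $ i > 0")
      case True
      from pf have "(\<Sum>j\<in>UNIV. Aopt istar $ i $ j * xh $ j) \<ge> b $ i"
        unfolding primal_feas_def by auto
      then show ?thesis using True by auto
    next
      case False
      then show ?thesis using H pf by auto
    qed
  qed
  show ?thesis using P1 P2 P3 P4 by blast
qed

end
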